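(* Let $n\ge2$, $K\in\mathcal S_n$, and let $u\in S^{n-1}$ be such that $h_K$ is twice continuously differentiable in a neighborhood of $u$. Let $x=\nabla h_K(u)\in\partial K$ and $y=x-u\in\partial K^c$, and let $0\le r_1\le\dots\le r_{n-1}\le1$ and $0\le s_1\le\dots\le s_{n-1}\le1$ be the principal radii of curvature of $K$ at $x$ (in normal direction $u$) and of $K^c$ at $y$ (in normal direction $-u$), respectively. Then \[ r_i+s_{n-i}=1,\qquad i=1,\dots,n-1. \]
   Context: $B(x,r)$ is the closed Euclidean ball. For $A\subseteq\mathbb R^n$, $A^c=\bigcap_{x\in A}B(x,1)$. $\mathcal S_n$ is the class of all sets of the form $\bigcap_{x\in A}B(x,1)$, $A\subseteq\mathbb R^n$. $h_K(v)=\sup_{z\in K}\langle z,v\rangle$ is the support function. For a convex body $T$ whose support function is $C^2$ near a unit vector $w$, the principal radii of curvature of $T$ at $\nabla h_T(w)$ (with respect to the normal $w$) are the eigenvalues of the Hessian $\nabla^2h_T(w)$ restricted to $w^\perp$ (the eigenvalue in direction $w$ being $0$). *)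

theory Defs
  imports "HOL-Analysis.Analysis"
begin

definition spindle_class :: "(real^'n) set set" where
  "spindle_class = {K. \<exists>A. K = (\<Inter>a\<in>A. cball a 1)}"

definition ball_dual :: "(real^'n) set \<Rightarrow> (real^'n) set" where
  "ball_dual A = (\<Inter>a\<in>A. cball a 1)"

definition supp :: "(real^'n) set \<Rightarrow> real^'n \<Rightarrow> real" where
  "supp K v = (SUP z\<in>K. z \<bullet> v)"

definition C2_near :: "(real^'n \<Rightarrow> real) \<Rightarrow> real^'n \<Rightarrow> bool" where
  "C2_near f w \<longleftrightarrow> (\<exists>U G H. open U \<and> w \<in> U \<and>
     (\<forall>p\<in>U. (f has_derivative (\<lambda>v. G p \<bullet> v)) (at p)) \<and>
     (\<forall>p\<in>U. (G has_derivative (\<lambda>v. (H p :: real^'n^'n) *v v)) (at p)) \<and>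
     continuous_on U H)"

definition grad :: "(real^'n \<Rightarrow> real) \<Rightarrow> real^'n \<Rightarrow> real^'n" where
  "grad f w = (THE g. (f has_derivative (\<lambda>v. g \<bullet> v)) (at w))"

definition hess :: "(real^'n \<Rightarrow> real) \<Rightarrow> real^'n \<Rightarrow> real^'n^'n" where
  "hess f w = (THE M. (grad f has_derivative (\<lambda>v. M *v v)) (at w))"

text \<open>r 1 \<le> ... \<le> r (n-1) are the principal radii of curvature of T at grad h_T(w)
  w.r.t. normal w: the eigenvalues (with multiplicity, sorted) of the Hessian of h_T at w
  restricted to w^\<bottom>, i.e. there is an orthonormal basis e 1..e (n-1) of w^\<bottom> of eigenvectors.\<close>
definition principal_radii :: "(real^'n) set \<Rightarrow> real^'n \<Rightarrow> (nat \<Rightarrow> real) \<Rightarrow> bool" where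
  "principal_radii T w r \<longleftrightarrow> C2_near (supp T) w \<and>
     (\<forall>i j. 1 \<le> i \<and> i \<le> j \<and> j \<le> CARD('n) - 1 \<longrightarrow> r i \<le> r j) \<and>
     (\<exists>e :: nat \<Rightarrow> real^'n.
        (\<forall>i\<in>{1..CARD('n) - 1}. e i \<bullet> w = 0 \<and> hess (supp T) w *v e i = r i *\<^sub>R e i) \<and>
        (\<forall>i\<in>{1..CARD('n) - 1}. \<forall>j\<in>{1..CARD('n) - 1}. e i \<bullet> e j = (if i = j then 1 else 0)))"

end

theory Submission
  imports Defs
begin

lemma grad_eqI:
  assumes "(f has_derivative (\<lambda>v. g \<bullet> v)) (at w)"
  shows "grad f w = g"
proof -
  have "\<And>g'. (f has_derivative (\<lambda>v. g' \<bullet> v)) (at w) \<Longrightarrow> g' = g"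
  proof -
    fix g' assume "(f has_derivative (\<lambda>v. g' \<bullet> v)) (at w)"
    then have "(\<lambda>v. g' \<bullet> v) = (\<lambda>v. g \<bullet> v)" using assms has_derivative_unique by blast
    then have "g' \<bullet> (g' - g) = g \<bullet> (g' - g)" by metis
    then have "(g' - g) \<bullet> (g' - g) = 0" by (simp add: inner_diff_left)
    then show "g' = g" by simp
  qed
  then show ?thesis unfolding grad_def using assms by (rule the_equality[rotated])
qed

lemma hess_eqI:
  assumes "(grad f has_derivative (\<lambda>v. M *v v)) (at w)"
  shows "hess f w = M"
proof -
  have "\<And>M'. (grad f has_derivative (\<lambda>v. M' *v v)) (at w) \<Longrightarrow> M' = M"
  proof -
    fix M' assume "(grad f has_derivative (\<lambda>v. M' *v v)) (at w)"
    then have "(\<lambda>v. M' *v v) = (\<lambda>v. M *v v)" using assms has_derivative_unique by blast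
    then show "M' = M" by (metis matrix_eq)
  qed
  then show ?thesis unfolding hess_def using assms by (rule the_equality[rotated])
qed

lemma supp_upper:
  assumes "bounded K" "z \<in> K"
  shows "z \<bullet> v \<le> supp K v"
proof -
  have "bdd_above ((\<lambda>z. z \<bullet> v) ` K)"
  proof -
    obtain B where B: "\<forall>z\<in>K. norm z \<le> B" using assms(1) bounded_iff by blast
    have "\<forall>z\<in>K. z \<bullet> v \<le> B * norm v"
      using B by (metis Cauchy_Schwarz_ineq2 abs_le_iff mult_right_mono norm_ge_zero order_trans)
    then show ?thesis by (auto intro: bdd_aboveI2)
  qed
  then show ?thesis unfolding supp_def using assms(2) by (rule cSUP_upper[rotated])
qed

lemma supp_eq_max:
  assumes "z \<in> K" "\<forall>z'\<in>K. z' \<bullet> v \<le> z \<bullet> v"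
  shows "supp K v = z \<bullet> v"
  unfolding supp_def
  by (rule antisym, rule cSUP_least, use assms in auto, rule cSUP_upper, auto intro: bdd_aboveI2)

lemma spindle_closed: "K \<in> spindle_class \<Longrightarrow> closed K"
  unfolding spindle_class_def by (auto intro: closed_INT)

lemma exists_max:
  assumes "compact (K::(real^'n) set)" "K \<noteq> {}"
  shows "\<exists>x\<in>K. \<forall>z\<in>K. z \<bullet> v \<le> x \<bullet> v"
proof -
  have "continuous_on K (\<lambda>z. z \<bullet> v)" by (intro continuous_on_inner continuous_on_id continuous_on_const)
  then show ?thesis using continuous_attains_sup[OF assms, of "\<lambda>z. z \<bullet> v"] by blast
qed

lemma grad_is_max:
  assumes "bounded K" "(supp K has_derivative (\<lambda>v. g \<bullet> v)) (at u)"
    and "x \<in> K" "\<forall>z\<in>K. z \<bullet> u \<le> x \<bullet> u"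
  shows "g = x"
proof -
  have "g \<bullet> v = x \<bullet> v" for v
  proof -
    define \<phi> where "\<phi> t = supp K (u + t *\<^sub>R v) - supp K u - t * (x \<bullet> v)" for t :: real
    have d1: "((\<lambda>t::real. u + t *\<^sub>R v) has_derivative (\<lambda>t. t *\<^sub>R v)) (at 0)"
      by (auto intro!: derivative_eq_intros)
    have d2: "(supp K has_derivative (\<lambda>v. g \<bullet> v)) (at (u + 0 *\<^sub>R v))" using assms(2) by simp
    have "(\<phi> has_derivative (\<lambda>t. g \<bullet> (t *\<^sub>R v) - t * (x \<bullet> v))) (at 0)"
    proof -
      have d3: "((\<lambda>t. supp K (u + t *\<^sub>R v)) has_derivative (\<lambda>t. g \<bullet> (t *\<^sub>R v))) (at 0)"
        using has_derivative_compose[OF d1 d2] by simp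
      have d4: "((\<lambda>t::real. supp K u + t * (x \<bullet> v)) has_derivative (\<lambda>t. t * (x \<bullet> v))) (at 0)"
        by (auto intro!: derivative_eq_intros)
      have "((\<lambda>t. supp K (u + t *\<^sub>R v) - (supp K u + t * (x \<bullet> v))) has_derivative (\<lambda>t. g \<bullet> (t *\<^sub>R v) - t * (x \<bullet> v))) (at 0)"
        by (rule has_derivative_diff[OF d3 d4])
      then show ?thesis unfolding \<phi>_def by (simp add: algebra_simps)
    qed
    then have D: "(\<phi> has_real_derivative (g \<bullet> v - x \<bullet> v)) (at 0)"
    proof -
      have "(\<lambda>t. g \<bullet> (t *\<^sub>R v) - t * (x \<bullet> v)) = (\<lambda>t. (g \<bullet> v - x \<bullet> v) * t)"
        by (auto simp: algebra_simps)
      with \<open>(\<phi> has_derivative _) _\<close> show ?thesis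
        by (simp add: has_field_derivative_def)
    qed
    have "\<phi> 0 \<le> \<phi> t" for t
    proof -
      have "supp K u = x \<bullet> u" using supp_eq_max assms by blast
      moreover have "x \<bullet> (u + t *\<^sub>R v) \<le> supp K (u + t *\<^sub>R v)" using supp_upper assms by blast
      ultimately show ?thesis unfolding \<phi>_def by (simp add: inner_add_right)
    qed
    then have "g \<bullet> v - x \<bullet> v = 0"
      using DERIV_local_min[OF D, of 1] by auto
    then show ?thesis by simp
  qed
  then have "(g - x) \<bullet> (g - x) = 0" by (simp add: inner_diff_left)
  then show ?thesis by simp
qed

lemma aux_id: "(\<rho>::real) + t * (1 - \<rho> - D) + 2 * t * ((D - 2 * E) / 4) * \<rho> + T
   = (1 - \<rho>) * (t * (1 - D) + T) + \<rho> * (1 - t * (D + 2 * E) / 2 + T)"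
  by (simp add: field_simps)

lemma spindle_support:
  fixes A K :: "(real^'n) set"
  assumes KA: "K = (\<Inter>a\<in>A. cball a 1)" and u: "norm u = 1" and xK: "x \<in> K"
    and xmax: "\<forall>z\<in>K. z \<bullet> u \<le> x \<bullet> u" and zK: "z \<in> K"
  shows "dist z (x - u) \<le> 1"
proof (rule ccontr)
  assume "\<not> dist z (x - u) \<le> 1"
  define d where "d = z - x"
  have uu: "u \<bullet> u = 1" using u by (simp add: dot_square_norm)
  have "dist z (x - u) = norm (d + u)" unfolding d_def dist_norm by (simp add: algebra_simps)
  then have "1 < norm (d + u)" using \<open>\<not> _\<close> by simp
  then have "1 < (d + u) \<bullet> (d + u)" by (metis dot_square_norm less_1_mult norm_ge_zero power2_eq_square less_le_trans zero_less_one less_imp_le)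
  then have "1 < d \<bullet> d + 2 * (d \<bullet> u) + 1" using uu by (simp add: algebra_simps inner_commute)
  define \<gamma> where "\<gamma> = d \<bullet> d + 2 * (d \<bullet> u)"
  have gpos: "\<gamma> > 0" using \<open>1 < d \<bullet> d + 2 * (d \<bullet> u) + 1\<close> unfolding \<gamma>_def by simp
  have du: "d \<bullet> u \<le> 0" using xmax zK unfolding d_def by (simp add: inner_diff_left)
  define \<beta> where "\<beta> = (d \<bullet> d - 2 * (d \<bullet> u)) / 4"
  have bpos: "\<beta> \<ge> 0" unfolding \<beta>_def using du inner_ge_zero[of d] by (smt (verit) divide_nonneg_pos)
  define w where "w = d + \<beta> *\<^sub>R u"
  have wu: "w \<bullet> u = \<gamma> / 4" unfolding w_def \<gamma>_def \<beta>_def using uu by (simp add: inner_add_left field_simps)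
  define c where "c = w \<bullet> w"
  have cpos: "c \<ge> 0" unfolding c_def by simp
  define t where "t = min (1 / (2 * (1 + c))) (\<gamma> / (2 * (1 + c)))"
  have tpos: "t > 0" unfolding t_def using gpos cpos by simp
  have t1: "t * (1 + c) \<le> 1 / 2"
  proof -
    have "t \<le> 1 / (2 * (1 + c))" unfolding t_def by simp
    then show ?thesis using cpos by (simp add: field_simps)
  qed
  have t2: "t * (1 + c) \<le> \<gamma> / 2"
  proof -
    have "t \<le> \<gamma> / (2 * (1 + c))" unfolding t_def by simp
    then show ?thesis using cpos by (simp add: field_simps)
  qed
  have "t \<le> t * (1 + c)" using tpos cpos by simp
  then have th: "t \<le> 1/2" using t1 by linarith
  have tc1: "t * c \<le> 1/2" using t1 tpos by (simp add: algebra_simps)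
  have tc2: "t * c \<le> \<gamma>/2" using t2 tpos by (simp add: algebra_simps)
  define p where "p = x + t *\<^sub>R w"
  have "p \<in> K"
    unfolding KA
  proof
    fix a assume aA: "a \<in> A"
    define v where "v = x - a"
    define \<rho> where "\<rho> = norm v"
    have r1: "\<rho> \<le> 1" using xK aA unfolding KA \<rho>_def v_def by (auto simp: dist_norm norm_minus_commute)
    have r0: "\<rho> \<ge> 0" unfolding \<rho>_def by simp
    have "norm (d + v) \<le> 1" using zK aA unfolding KA d_def v_def by (auto simp: dist_norm norm_minus_commute)
    then have "(d + v) \<bullet> (d + v) \<le> 1" by (metis dot_square_norm norm_ge_zero power_le_one)
    then have e1: "d \<bullet> d + 2 * (d \<bullet> v) + v \<bullet> v \<le> 1" by (simp add: algebra_simps inner_commute)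
    have e2: "v \<bullet> u \<le> \<rho>" unfolding \<rho>_def using norm_cauchy_schwarz[of v u] u by simp
    have e3: "v \<bullet> v = \<rho>^2" unfolding \<rho>_def by (simp add: dot_square_norm)
    have "(v + t *\<^sub>R w) \<bullet> (v + t *\<^sub>R w) = v \<bullet> v + 2 * t * (d \<bullet> v + \<beta> * (v \<bullet> u)) + t^2 * c"
      unfolding c_def w_def by (simp add: algebra_simps inner_commute power2_eq_square)
    also have "\<dots> \<le> \<rho>^2 + t * (1 - \<rho>^2 - d \<bullet> d) + 2 * t * \<beta> * \<rho> + t^2 * c"
    proof -
      have "2 * (d \<bullet> v) \<le> 1 - \<rho>^2 - d \<bullet> d" using e1 e3 by linarith
      then have "t * (2 * (d \<bullet> v)) \<le> t * (1 - \<rho>^2 - d \<bullet> d)" using tpos by (intro mult_left_mono) auto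
      then have "2 * t * (d \<bullet> v) \<le> t * (1 - \<rho>^2 - d \<bullet> d)" by (simp add: algebra_simps)
      moreover have "2 * t * (\<beta> * (v \<bullet> u)) \<le> 2 * t * \<beta> * \<rho>" using e2 tpos bpos
        by (simp add: mult_left_mono)
      ultimately show ?thesis using e3 by (simp add: algebra_simps)
    qed
    also have "\<dots> \<le> \<rho> + t * (1 - \<rho> - d \<bullet> d) + 2 * t * \<beta> * \<rho> + t^2 * c"
    proof -
      have "\<rho>^2 \<le> \<rho>" using r0 r1 by (simp add: power2_eq_square mult_left_le_one_le)
      then have "(1 - t) * \<rho>^2 \<le> (1 - t) * \<rho>" using th by (simp add: mult_left_mono)
      then show ?thesis by (simp add: algebra_simps)
    qed
    also have "\<dots> = (1 - \<rho>) * (t * (1 - d \<bullet> d) + t^2 * c) + \<rho> * (1 - t * \<gamma> / 2 + t^2 * c)"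
      unfolding \<beta>_def \<gamma>_def by (rule aux_id)
    also have "\<dots> \<le> (1 - \<rho>) * 1 + \<rho> * 1"
    proof -
      have X: "t * (1 - d \<bullet> d) + t^2 * c \<le> 1"
      proof -
        have "t * (1 - d \<bullet> d) \<le> t" using tpos by (simp add: mult_left_le)
        moreover have "t^2 * c \<le> 1/2"
        proof -
          have "t^2 * c = t * (t * c)" by (simp add: power2_eq_square)
          also have "\<dots> \<le> t * (1/2)" using tc1 tpos by (intro mult_left_mono) auto
          also have "\<dots> \<le> 1/2" using th by simp
          finally show ?thesis .
        qed
        ultimately show ?thesis using th by simp
      qed
      have Y: "1 - t * \<gamma> / 2 + t^2 * c \<le> 1"
      proof -
        have "t^2 * c \<le> t * (\<gamma> / 2)" using tc2 tpos by (simp add: power2_eq_square mult.assoc mult_left_mono)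
        then show ?thesis by simp
      qed
      have "(1 - \<rho>) * (t * (1 - d \<bullet> d) + t^2 * c) \<le> (1 - \<rho>) * 1" using X r1 by (intro mult_left_mono) auto
      moreover have "\<rho> * (1 - t * \<gamma> / 2 + t^2 * c) \<le> \<rho> * 1" using Y r0 by (intro mult_left_mono) auto
      ultimately show ?thesis by linarith
    qed
    finally have "(v + t *\<^sub>R w) \<bullet> (v + t *\<^sub>R w) \<le> 1" by simp
    then have "norm (v + t *\<^sub>R w) \<le> 1" by (simp add: norm_eq_sqrt_inner)
    then show "p \<in> cball a 1" unfolding p_def v_def mem_cball dist_norm by (simp add: algebra_simps norm_minus_commute)
  qed
  moreover have "p \<bullet> u > x \<bullet> u" unfolding p_def using wu tpos gpos by (simp add: inner_add_left)
  ultimately show False using xmax by force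
qed

lemma spindle_y_in_dual:
  assumes "K \<in> spindle_class" "norm u = 1" "x \<in> K" "\<forall>z\<in>K. z \<bullet> u \<le> x \<bullet> u"
  shows "x - u \<in> ball_dual K"
proof -
  obtain A where KA: "K = (\<Inter>a\<in>A. cball a 1)" using assms(1) unfolding spindle_class_def by blast
  show ?thesis unfolding ball_dual_def using spindle_support[OF KA assms(2-4)] by auto
qed

lemma dual_supp:
  fixes K :: "(real^'n) set"
  assumes sK: "K \<in> spindle_class" and ne: "K \<noteq> {}" and bK: "bounded K"
  shows "supp (ball_dual K) w = norm w - supp K (-w)"
proof -
  obtain u :: "real^'n" where u: "norm u = 1" "w = - (norm w) *\<^sub>R u"
  proof (cases "w = 0")
    case True
    obtain b :: "real^'n" where "b \<in> Basis" using nonempty_Basis by blast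
    then show ?thesis using that[of b] True by simp
  next
    case False
    then show ?thesis using that[of "- (1 / norm w) *\<^sub>R w"] by simp
  qed
  have cK: "compact K" using bK spindle_closed[OF sK] by (simp add: compact_eq_bounded_closed)
  obtain x where xK: "x \<in> K" and xmax: "\<forall>z\<in>K. z \<bullet> u \<le> x \<bullet> u" using exists_max[OF cK ne] by blast
  have yK: "x - u \<in> ball_dual K" using spindle_y_in_dual[OF sK u(1) xK xmax] .
  have uu: "u \<bullet> u = 1" using u(1) by (simp add: dot_square_norm)
  have uw: "u \<bullet> w = - norm w"
  proof -
    have "u \<bullet> w = u \<bullet> (- (norm w) *\<^sub>R u)" using u(2) by (rule arg_cong)
    then show ?thesis using uu by simp
  qed
  have s1: "supp K (-w) = x \<bullet> (-w)"
  proof (rule supp_eq_max[OF xK], intro ballI)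
    fix z assume "z \<in> K"
    then have "norm w * (z \<bullet> u) \<le> norm w * (x \<bullet> u)" using xmax by (simp add: mult_left_mono)
    then show "z \<bullet> - w \<le> x \<bullet> - w" by (subst (1 2) u(2)) simp
  qed
  have s2: "supp (ball_dual K) w = (x - u) \<bullet> w"
  proof (rule supp_eq_max[OF yK], intro ballI)
    fix y assume "y \<in> ball_dual K"
    then have "dist x y \<le> 1" using xK unfolding ball_dual_def by auto
    then have "norm (y - x) \<le> 1" by (simp add: dist_norm norm_minus_commute)
    have "(y - x) \<bullet> w \<le> norm (y - x) * norm w" by (rule norm_cauchy_schwarz)
    also have "\<dots> \<le> norm w" using \<open>norm (y - x) \<le> 1\<close> by (simp add: mult_left_le_one_le)
    finally have "y \<bullet> w \<le> x \<bullet> w + norm w" by (simp add: inner_diff_left)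
    moreover have "(x - u) \<bullet> w = x \<bullet> w + norm w"
      by (simp add: inner_diff_left uw)
    ultimately show "y \<bullet> w \<le> (x - u) \<bullet> w" by simp
  qed
  have "(x - u) \<bullet> w = x \<bullet> w + norm w" by (simp add: inner_diff_left uw)
  then show ?thesis using s1 s2 by simp
qed

definition outerp :: "real^'n \<Rightarrow> real^'n^'n" where
  "outerp p = (\<chi> i j. p $ i * p $ j)"

definition Hn :: "real^'n \<Rightarrow> real^'n^'n" where
  "Hn p = inverse (norm p) *\<^sub>R mat 1 - (inverse (norm p))^3 *\<^sub>R outerp p"

lemma outerp_mv: "outerp p *v v = (p \<bullet> v) *\<^sub>R p"
  by (simp add: vec_eq_iff matrix_vector_mult_def outerp_def inner_vec_def sum_distrib_left mult_ac)

lemma Hn_mv: "Hn p *v v = inverse (norm p) *\<^sub>R v - (inverse (norm p)^3 * (p \<bullet> v)) *\<^sub>R p"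
  unfolding Hn_def matrix_vector_mult_diff_rdistrib
  by (simp only: flip: scaleR_matrix_vector_assoc) (simp add: outerp_mv)

lemma Hn_neg: "Hn (-p) = Hn p"
proof -
  have "outerp (-p) = outerp p" unfolding outerp_def by (simp add: vec_eq_iff)
  then show ?thesis unfolding Hn_def by simp
qed

lemma dnorm: "p \<noteq> 0 \<Longrightarrow> (norm has_derivative (\<lambda>v. (inverse (norm p) *\<^sub>R p) \<bullet> v)) (at p)"
  using has_derivative_norm[of p] by (simp add: sgn_div_norm inner_commute divide_inverse_commute)

lemma dGn:
  fixes p :: "real^'n"
  assumes "p \<noteq> 0"
  shows "((\<lambda>q. inverse (norm q) *\<^sub>R q) has_derivative (\<lambda>v. Hn p *v v)) (at p)"
proof -
  have "((\<lambda>q. inverse (norm q) *\<^sub>R q) has_derivative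
     (\<lambda>h. inverse (norm p) *\<^sub>R h + (- (inverse (norm p) * (h \<bullet> sgn p) * inverse (norm p))) *\<^sub>R p)) (at p)"
  proof -
    have n: "(norm has_derivative (\<lambda>h. h \<bullet> sgn p)) (at p)" by (rule has_derivative_norm) fact
    have i: "((\<lambda>q. inverse (norm q)) has_derivative (\<lambda>h. - (inverse (norm p) * (h \<bullet> sgn p) * inverse (norm p)))) (at p)"
      by (rule Deriv.has_derivative_inverse[OF _ n]) (simp add: assms)
    show ?thesis using has_derivative_scaleR[OF i has_derivative_ident] by simp
  qed
  moreover have "(\<lambda>h. inverse (norm p) *\<^sub>R h + (- (inverse (norm p) * (h \<bullet> sgn p) * inverse (norm p))) *\<^sub>R p)
      = (\<lambda>v. Hn p *v v)"
  proof
    fix h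
    have "h \<bullet> sgn p = inverse (norm p) * (p \<bullet> h)" by (simp add: sgn_div_norm inner_commute divide_inverse_commute)
    then show "inverse (norm p) *\<^sub>R h + (- (inverse (norm p) * (h \<bullet> sgn p) * inverse (norm p))) *\<^sub>R p = Hn p *v h"
      by (simp add: Hn_mv power3_eq_cube mult_ac)
  qed
  ultimately show ?thesis by simp
qed

lemma outerp_cont: "continuous_on S outerp"
  unfolding outerp_def
  by (intro continuous_on_vec_lambda continuous_on_mult continuous_on_component continuous_on_id)

lemma Hn_cont: "continuous_on (-{0}) Hn"
proof -
  have i: "continuous_on (-{0}) (\<lambda>p::real^'n. inverse (norm p))"
    by (rule continuous_on_inverse[OF continuous_on_norm[OF continuous_on_id]]) auto
  show ?thesis unfolding Hn_def
    by (intro continuous_on_diff continuous_on_scaleR i continuous_on_const continuous_on_power outerp_cont)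
qed

lemma C2_dual:
  fixes K K' :: "(real^'n) set"
  assumes C2: "C2_near (supp K) u" and dual: "\<And>w. supp K' w = norm w - supp K (-w)"
    and u: "norm u = 1"
  shows "(supp K has_derivative (\<lambda>v. grad (supp K) u \<bullet> v)) (at u)"
    and "C2_near (supp K') (-u)"
    and "grad (supp K') (-u) = grad (supp K) u - u"
    and "hess (supp K') (-u) = Hn u - hess (supp K) u"
proof -
  obtain U G H where oU: "open U" and uU: "u \<in> U"
    and hG: "\<forall>p\<in>U. (supp K has_derivative (\<lambda>v. G p \<bullet> v)) (at p)"
    and hH: "\<forall>p\<in>U. (G has_derivative (\<lambda>v. (H p :: real^'n^'n) *v v)) (at p)"
    and cH: "continuous_on U H"
    using C2 unfolding C2_near_def by blast
  have gradK: "grad (supp K) p = G p" if "p \<in> U" for p using hG that grad_eqI by blast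
  show "(supp K has_derivative (\<lambda>v. grad (supp K) u \<bullet> v)) (at u)" using hG uU gradK by auto
  define U' where "U' = uminus ` U - {0}"
  have oU': "open U'" unfolding U'_def by (intro open_Diff open_negations oU closed_singleton)
  have U'D: "q \<noteq> 0 \<and> -q \<in> U" if "q \<in> U'" for q
    using that unfolding U'_def by (auto simp: image_iff)
  have mu: "-u \<in> U'" unfolding U'_def using uU u by auto
  define G' where "G' q = inverse (norm q) *\<^sub>R q + G (-q)" for q
  define H' where "H' q = Hn q - H (-q)" for q
  have fK': "supp K' = (\<lambda>w. norm w - supp K (-w))" using dual by auto
  have dF: "(supp K' has_derivative (\<lambda>v. G' q \<bullet> v)) (at q)" if "q \<in> U'" for q
  proof -
    have q: "q \<noteq> 0" "-q \<in> U" using U'D[OF that] by auto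
    have dneg: "((\<lambda>w. supp K (-w)) has_derivative (\<lambda>v. G (-q) \<bullet> (-v))) (at q)"
    proof -
      have m: "((\<lambda>w. -w) has_derivative (\<lambda>v. -v)) (at q)" by (intro derivative_intros)
      have h: "(supp K has_derivative (\<lambda>v. G (-q) \<bullet> v)) (at (-q))" using hG q by auto
      show ?thesis using has_derivative_compose[OF m h] .
    qed
    have "((\<lambda>w. norm w - supp K (-w)) has_derivative (\<lambda>v. (inverse (norm q) *\<^sub>R q) \<bullet> v - G (-q) \<bullet> (-v))) (at q)"
      by (rule has_derivative_diff[OF dnorm[OF q(1)] dneg])
    moreover have "(\<lambda>v. (inverse (norm q) *\<^sub>R q) \<bullet> v - G (-q) \<bullet> (-v)) = (\<lambda>v. G' q \<bullet> v)"
      unfolding G'_def by (auto simp: inner_add_left)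
    ultimately show ?thesis using fK' by simp
  qed
  have dG': "(G' has_derivative (\<lambda>v. H' q *v v)) (at q)" if "q \<in> U'" for q
  proof -
    have q: "q \<noteq> 0" "-q \<in> U" using U'D[OF that] by auto
    have dneg: "((\<lambda>w. G (-w)) has_derivative (\<lambda>v. H (-q) *v (-v))) (at q)"
    proof -
      have m: "((\<lambda>w. -w) has_derivative (\<lambda>v. -v)) (at q)" by (intro derivative_intros)
      have h: "(G has_derivative (\<lambda>v. H (-q) *v v)) (at (-q))" using hH q by auto
      show ?thesis using has_derivative_compose[OF m h] .
    qed
    have "(G' has_derivative (\<lambda>v. Hn q *v v + H (-q) *v (-v))) (at q)"
      unfolding G'_def by (rule has_derivative_add[OF dGn[OF q(1)] dneg])
    moreover have "(\<lambda>v. Hn q *v v + H (-q) *v (-v)) = (\<lambda>v. H' q *v v)"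
      unfolding H'_def by (auto simp: matrix_vector_mult_diff_rdistrib vec.neg)
    ultimately show ?thesis by simp
  qed
  have cH': "continuous_on U' H'"
  proof -
    have "U' \<subseteq> -{0}" using U'D by auto
    then have c1: "continuous_on U' Hn" using continuous_on_subset[OF Hn_cont] by blast
    have "uminus ` U' \<subseteq> U" using U'D by auto
    then have c2: "continuous_on U' (\<lambda>q. H (-q))"
      by (intro continuous_on_compose2[OF cH continuous_on_minus[OF continuous_on_id]])
    show ?thesis unfolding H'_def by (rule continuous_on_diff[OF c1 c2])
  qed
  show "C2_near (supp K') (-u)" unfolding C2_near_def
    using oU' mu dF dG' cH' by blast
  have g': "grad (supp K') q = G' q" if "q \<in> U'" for q using dF[OF that] grad_eqI by blast
  show "grad (supp K') (-u) = grad (supp K) u - u"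
    using g'[OF mu] gradK[OF uU] u unfolding G'_def by simp
  have "(grad (supp K') has_derivative (\<lambda>v. H' (-u) *v v)) (at (-u))"
    by (rule has_derivative_transform_within_open[OF dG'[OF mu] oU' mu]) (simp add: g')
  then have "hess (supp K') (-u) = H' (-u)" by (rule hess_eqI)
  moreover have "(grad (supp K) has_derivative (\<lambda>v. H u *v v)) (at u)"
    by (rule has_derivative_transform_within_open[OF _ oU uU]) (use hH uU gradK in auto)
  then have "hess (supp K) u = H u" by (rule hess_eqI)
  ultimately show "hess (supp K') (-u) = Hn u - hess (supp K) u" unfolding H'_def by (simp add: Hn_neg)
qed

lemma mv_scaleR: "(H::real^'n^'n) *v (c *\<^sub>R v) = c *\<^sub>R (H *v v)"
  by (rule linear_cmul[OF matrix_vector_mul_linear])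

lemma orth_sum_inner:
  fixes e :: "nat \<Rightarrow> real^'n"
  assumes "finite I" "\<forall>i\<in>I. \<forall>j\<in>I. e i \<bullet> e j = (if i = j then 1 else 0)"
  shows "(\<Sum>i\<in>I. a i *\<^sub>R e i) \<bullet> (\<Sum>j\<in>I. b j *\<^sub>R e j) = (\<Sum>i\<in>I. a i * b i)"
proof -
  have "(\<Sum>i\<in>I. a i *\<^sub>R e i) \<bullet> (\<Sum>j\<in>I. b j *\<^sub>R e j) = (\<Sum>j\<in>I. \<Sum>i\<in>I. a i * b j * (e i \<bullet> e j))"
    unfolding inner_sum_left inner_sum_right by (simp add: mult_ac)
  also have "\<dots> = (\<Sum>i\<in>I. \<Sum>j\<in>I. a i * b j * (e i \<bullet> e j))" by (rule sum.swap)
  also have "\<dots> = (\<Sum>i\<in>I. \<Sum>j\<in>I. if i = j then a i * b i else 0)"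
    by (intro sum.cong refl) (use assms(2) in auto)
  also have "\<dots> = (\<Sum>i\<in>I. a i * b i)" using assms(1) by simp
  finally show ?thesis .
qed

lemma quad_repr:
  fixes e :: "nat \<Rightarrow> real^'n" and H :: "real^'n^'n"
  assumes fin: "finite I" and on: "\<forall>i\<in>I. \<forall>j\<in>I. e i \<bullet> e j = (if i = j then 1 else 0)"
    and ev: "\<forall>i\<in>I. H *v e i = r i *\<^sub>R e i"
    and v: "v \<in> span (e ` I)"
  shows "\<exists>c. (H *v v) \<bullet> v = (\<Sum>i\<in>I. c i * c i * r i) \<and> v \<bullet> v = (\<Sum>i\<in>I. c i * c i)"
proof -
  have inj: "inj_on e I"
  proof (rule inj_onI)
    fix i j assume "i \<in> I" "j \<in> I" "e i = e j"
    then have "e i \<bullet> e j = 1" using on by auto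
    then show "i = j" using on \<open>i \<in> I\<close> \<open>j \<in> I\<close> by (auto split: if_splits)
  qed
  obtain c' where "v = (\<Sum>w\<in>e ` I. c' w *\<^sub>R w)" using v span_finite[of "e ` I"] fin by auto
  then have vr: "v = (\<Sum>i\<in>I. c' (e i) *\<^sub>R e i)" by (simp add: sum.reindex[OF inj])
  define c where "c i = c' (e i)" for i
  have vr': "v = (\<Sum>i\<in>I. c i *\<^sub>R e i)" using vr unfolding c_def .
  have "H *v v = (\<Sum>i\<in>I. (c i * r i) *\<^sub>R e i)"
    unfolding vr' vec.sum using ev by (intro sum.cong refl) (simp add: mv_scaleR)
  then have "(H *v v) \<bullet> v = (\<Sum>i\<in>I. c i * r i * c i)"
    using orth_sum_inner[OF fin on] vr' by simp
  moreover have "v \<bullet> v = (\<Sum>i\<in>I. c i * c i)" using orth_sum_inner[OF fin on] vr' by simp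
  ultimately show ?thesis by (intro exI[of _ c]) (simp add: mult_ac)
qed

lemma quad_le:
  fixes e :: "nat \<Rightarrow> real^'n" and H :: "real^'n^'n"
  assumes fin: "finite I" and on: "\<forall>i\<in>I. \<forall>j\<in>I. e i \<bullet> e j = (if i = j then 1 else 0)"
    and ev: "\<forall>i\<in>I. H *v e i = r i *\<^sub>R e i" and b: "\<forall>i\<in>I. r i \<le> \<mu>"
    and v: "v \<in> span (e ` I)"
  shows "(H *v v) \<bullet> v \<le> \<mu> * (v \<bullet> v)"
proof -
  obtain c where c: "(H *v v) \<bullet> v = (\<Sum>i\<in>I. c i * c i * r i)" "v \<bullet> v = (\<Sum>i\<in>I. c i * c i)"
    using quad_repr[OF fin on ev v] by blast
  have "(\<Sum>i\<in>I. c i * c i * r i) \<le> (\<Sum>i\<in>I. c i * c i * \<mu>)"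
    using b by (intro sum_mono mult_left_mono) auto
  then show ?thesis using c by (simp add: sum_distrib_left mult_ac)
qed

lemma quad_ge:
  fixes e :: "nat \<Rightarrow> real^'n" and H :: "real^'n^'n"
  assumes fin: "finite I" and on: "\<forall>i\<in>I. \<forall>j\<in>I. e i \<bullet> e j = (if i = j then 1 else 0)"
    and ev: "\<forall>i\<in>I. H *v e i = r i *\<^sub>R e i" and b: "\<forall>i\<in>I. \<mu> \<le> r i"
    and v: "v \<in> span (e ` I)"
  shows "\<mu> * (v \<bullet> v) \<le> (H *v v) \<bullet> v"
proof -
  obtain c where c: "(H *v v) \<bullet> v = (\<Sum>i\<in>I. c i * c i * r i)" "v \<bullet> v = (\<Sum>i\<in>I. c i * c i)"
    using quad_repr[OF fin on ev v] by blast
  have "(\<Sum>i\<in>I. c i * c i * \<mu>) \<le> (\<Sum>i\<in>I. c i * c i * r i)"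
    using b by (intro sum_mono mult_left_mono) auto
  then show ?thesis using c by (simp add: sum_distrib_left mult_ac)
qed

lemma dim_orth:
  fixes e :: "nat \<Rightarrow> real^'n"
  assumes fin: "finite I" and on: "\<forall>i\<in>I. \<forall>j\<in>I. e i \<bullet> e j = (if i = j then 1 else 0)"
  shows "dim (span (e ` I)) = card I"
proof -
  have inj: "inj_on e I"
  proof (rule inj_onI)
    fix i j assume "i \<in> I" "j \<in> I" "e i = e j"
    then have "e i \<bullet> e j = 1" using on by auto
    then show "i = j" using on \<open>i \<in> I\<close> \<open>j \<in> I\<close> by (auto split: if_splits)
  qed
  have "pairwise orthogonal (e ` I)"
    unfolding pairwise_def orthogonal_def using on by auto
  moreover have "0 \<notin> e ` I" using on by force
  ultimately have "independent (e ` I)" by (rule pairwise_orthogonal_independent)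
  then have "dim (span (e ` I)) = card (e ` I)" by (rule dim_span_eq_card_independent)
  then show ?thesis using card_image[OF inj] by simp
qed

lemma spectral_le:
  fixes u :: "real^'n" and H :: "real^'n^'n" and e g :: "nat \<Rightarrow> real^'n"
  assumes u: "u \<noteq> 0" and m: "m = CARD('n) - 1"
    and he: "\<forall>i\<in>{1..m}. e i \<bullet> u = 0 \<and> H *v e i = r i *\<^sub>R e i"
    and oe: "\<forall>i\<in>{1..m}. \<forall>j\<in>{1..m}. e i \<bullet> e j = (if i = j then 1 else 0)"
    and hg: "\<forall>i\<in>{1..m}. g i \<bullet> u = 0 \<and> H *v g i = t i *\<^sub>R g i"
    and og: "\<forall>i\<in>{1..m}. \<forall>j\<in>{1..m}. g i \<bullet> g j = (if i = j then 1 else 0)"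
    and mr: "\<forall>i j. 1 \<le> i \<and> i \<le> j \<and> j \<le> m \<longrightarrow> r i \<le> r j"
    and mt: "\<forall>i j. 1 \<le> i \<and> i \<le> j \<and> j \<le> m \<longrightarrow> t i \<le> t j"
    and k: "k \<in> {1..m}"
  shows "t k \<le> r k"
proof (rule ccontr)
  assume "\<not> t k \<le> r k"
  then have lt: "r k < t k" by simp
  define I1 where "I1 = {1..k}"
  define I2 where "I2 = {k..m}"
  have I1s: "I1 \<subseteq> {1..m}" and I2s: "I2 \<subseteq> {1..m}" using k unfolding I1_def I2_def by auto
  define V where "V = span (e ` I1)"
  define W where "W = span (g ` I2)"
  define P where "P = {x. u \<bullet> x = 0}"
  have sP: "subspace P" unfolding P_def by (rule subspace_hyperplane)
  have VP: "V \<subseteq> P" unfolding V_def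
    by (rule span_minimal[OF _ sP]) (use he I1s in \<open>auto simp: P_def inner_commute\<close>)
  have WP: "W \<subseteq> P" unfolding W_def
    by (rule span_minimal[OF _ sP]) (use hg I2s in \<open>auto simp: P_def inner_commute\<close>)
  have dV: "dim V = k" unfolding V_def using dim_orth[of I1 e] oe I1s unfolding I1_def
    by (simp add: subset_iff)
  have dW: "dim W = m + 1 - k" unfolding W_def using dim_orth[of I2 g] og I2s unfolding I2_def
    by (simp add: subset_iff)
  have "{x + y |x y. x \<in> V \<and> y \<in> W} \<subseteq> P"
    using VP WP subspace_add[OF sP] by blast
  then have "dim {x + y |x y. x \<in> V \<and> y \<in> W} \<le> dim P" by (rule dim_subset)
  also have "dim P = m" unfolding P_def m using dim_hyperplane[OF u] by simp
  finally have ds: "dim {x + y |x y. x \<in> V \<and> y \<in> W} \<le> m" .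
  have "dim {x + y |x y. x \<in> V \<and> y \<in> W} + dim (V \<inter> W) = dim V + dim W"
    unfolding V_def W_def by (rule dim_sums_Int) (auto intro: subspace_span)
  moreover have "dim V + dim W = m + 1" using dV dW k by simp
  ultimately have "dim (V \<inter> W) \<noteq> 0" using ds by linarith
  then have "\<not> (V \<inter> W \<subseteq> {0})" using dim_eq_0[of "V \<inter> W"] by metis
  then obtain v where vV: "v \<in> V" and vW: "v \<in> W" and v0: "v \<noteq> 0" by auto
  have "(H *v v) \<bullet> v \<le> r k * (v \<bullet> v)"
  proof (rule quad_le[of I1 e H r])
    show "finite I1" unfolding I1_def by simp
    show "\<forall>i\<in>I1. \<forall>j\<in>I1. e i \<bullet> e j = (if i = j then 1 else 0)" using oe I1s by blast
    show "\<forall>i\<in>I1. H *v e i = r i *\<^sub>R e i" using he I1s by blast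
    show "\<forall>i\<in>I1. r i \<le> r k" using mr k unfolding I1_def by auto
    show "v \<in> span (e ` I1)" using vV unfolding V_def .
  qed
  moreover have "t k * (v \<bullet> v) \<le> (H *v v) \<bullet> v"
  proof (rule quad_ge[of I2 g H t])
    show "finite I2" unfolding I2_def by simp
    show "\<forall>i\<in>I2. \<forall>j\<in>I2. g i \<bullet> g j = (if i = j then 1 else 0)" using og I2s by blast
    show "\<forall>i\<in>I2. H *v g i = t i *\<^sub>R g i" using hg I2s by blast
    show "\<forall>i\<in>I2. t k \<le> t i" using mt k unfolding I2_def by auto
    show "v \<in> span (g ` I2)" using vW unfolding W_def .
  qed
  ultimately have "t k * (v \<bullet> v) \<le> r k * (v \<bullet> v)" by linarith
  moreover have "v \<bullet> v > 0" using v0 by simp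
  ultimately show False using lt by simp
qed

theorem theorem4p27:
  fixes K :: "(real^'n) set" and u x y :: "real^'n"
  assumes "CARD('n) \<ge> 2"
    and "K \<in> spindle_class" and "K \<noteq> {}" and "bounded K"
    and "norm u = 1"
    and "C2_near (supp K) u"
    and "x = grad (supp K) u" and "y = x - u"
  shows "x \<in> frontier K \<and> y \<in> frontier (ball_dual K) \<and>
         C2_near (supp (ball_dual K)) (-u) \<and> grad (supp (ball_dual K)) (-u) = y \<and>
         (\<forall>r s. principal_radii K u r \<longrightarrow> principal_radii (ball_dual K) (-u) s \<longrightarrow>
            (\<forall>i\<in>{1..CARD('n) - 1}. r i + s (CARD('n) - i) = 1))"
proof -
  note card = assms(1) and sK = assms(2) and ne = assms(3) and bK = assms(4) and u = assms(5)
    and C2 = assms(6) and xdef = assms(7) and ydef = assms(8)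
  have cK: "compact K" using bK spindle_closed[OF sK] by (simp add: compact_eq_bounded_closed)
  have dual: "\<And>w. supp (ball_dual K) w = norm w - supp K (-w)" using dual_supp[OF sK ne bK] .
  note CD = C2_dual[OF C2 dual u]
  obtain x0 where x0K: "x0 \<in> K" and x0max: "\<forall>z\<in>K. z \<bullet> u \<le> x0 \<bullet> u" using exists_max[OF cK ne] by blast
  have "grad (supp K) u = x0" by (rule grad_is_max[OF bK CD(1) x0K x0max])
  then have xx0: "x = x0" using xdef by simp
  have xK: "x \<in> K" and xmax: "\<forall>z\<in>K. z \<bullet> u \<le> x \<bullet> u" using x0K x0max xx0 by auto
  have yK: "y \<in> ball_dual K" using spindle_y_in_dual[OF sK u xK xmax] ydef by simp
  have uu: "u \<bullet> u = 1" using u by (simp add: dot_square_norm)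
  have fr1: "x \<in> frontier K"
  proof -
    have "x \<notin> interior K"
    proof
      assume "x \<in> interior K"
      then obtain e where e: "e > 0" "ball x e \<subseteq> K" using mem_interior by blast
      have "x + (e/2) *\<^sub>R u \<in> ball x e" using e u by (simp add: dist_norm)
      then have "x + (e/2) *\<^sub>R u \<in> K" using e by blast
      then have "(x + (e/2) *\<^sub>R u) \<bullet> u \<le> x \<bullet> u" using xmax by blast
      then show False using e uu by (simp add: inner_add_left)
    qed
    then show ?thesis using xK spindle_closed[OF sK] by (simp add: frontier_def)
  qed
  have cD: "closed (ball_dual K)" unfolding ball_dual_def by (auto intro: closed_INT)
  have fr2: "y \<in> frontier (ball_dual K)"
  proof -
    have "y \<notin> interior (ball_dual K)"
    proof
      assume "y \<in> interior (ball_dual K)"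
      then obtain e where e: "e > 0" "ball y e \<subseteq> ball_dual K" using mem_interior by blast
      have "y - (e/2) *\<^sub>R u \<in> ball y e" using e u by (simp add: dist_norm)
      then have "y - (e/2) *\<^sub>R u \<in> ball_dual K" using e by blast
      then have "dist x (y - (e/2) *\<^sub>R u) \<le> 1" using xK unfolding ball_dual_def by auto
      moreover have "x - (y - (e/2) *\<^sub>R u) = (1 + e/2) *\<^sub>R u" using ydef by (simp add: algebra_simps)
      ultimately have "norm ((1 + e/2) *\<^sub>R u) \<le> 1" by (simp add: dist_norm)
      then show False using e u by simp
    qed
    then show ?thesis using yK cD by (simp add: frontier_def)
  qed
  have g2: "grad (supp (ball_dual K)) (-u) = y" using CD(3) xdef ydef by simp
  have radii: "\<forall>i\<in>{1..CARD('n) - 1}. r i + s (CARD('n) - i) = 1"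
    if pr: "principal_radii K u r" and ps: "principal_radii (ball_dual K) (-u) s" for r s
  proof -
    define m where "m = CARD('n) - 1"
    define Hk where "Hk = hess (supp K) u"
    obtain e :: "nat \<Rightarrow> real^'n" where
      he: "\<forall>i\<in>{1..m}. e i \<bullet> u = 0 \<and> Hk *v e i = r i *\<^sub>R e i" and
      oe: "\<forall>i\<in>{1..m}. \<forall>j\<in>{1..m}. e i \<bullet> e j = (if i = j then 1 else 0)" and
      mr: "\<forall>i j. 1 \<le> i \<and> i \<le> j \<and> j \<le> m \<longrightarrow> r i \<le> r j"
      using pr unfolding principal_radii_def m_def Hk_def by blast
    obtain f :: "nat \<Rightarrow> real^'n" where
      hf: "\<forall>i\<in>{1..m}. f i \<bullet> (-u) = 0 \<and> hess (supp (ball_dual K)) (-u) *v f i = s i *\<^sub>R f i" and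
      of: "\<forall>i\<in>{1..m}. \<forall>j\<in>{1..m}. f i \<bullet> f j = (if i = j then 1 else 0)" and
      ms: "\<forall>i j. 1 \<le> i \<and> i \<le> j \<and> j \<le> m \<longrightarrow> s i \<le> s j"
      using ps unfolding principal_radii_def m_def by blast
    have hf': "f i \<bullet> u = 0 \<and> Hk *v f i = (1 - s i) *\<^sub>R f i" if "i \<in> {1..m}" for i
    proof -
      have a: "f i \<bullet> u = 0" using hf that by simp
      have "(Hn u - Hk) *v f i = s i *\<^sub>R f i" using hf that CD(4) unfolding Hk_def by simp
      moreover have "Hn u *v f i = f i" using a u by (simp add: Hn_mv inner_commute)
      ultimately have "f i - Hk *v f i = s i *\<^sub>R f i" by (simp add: matrix_vector_mult_diff_rdistrib)
      then have "Hk *v f i = f i - s i *\<^sub>R f i" by (simp add: algebra_simps)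
      then show ?thesis using a by (simp add: algebra_simps)
    qed
    define g where "g j = f (CARD('n) - j)" for j
    define t where "t j = 1 - s (CARD('n) - j)" for j
    have idx: "CARD('n) - j \<in> {1..m}" if "j \<in> {1..m}" for j using that card unfolding m_def by auto
    have hg: "\<forall>i\<in>{1..m}. g i \<bullet> u = 0 \<and> Hk *v g i = t i *\<^sub>R g i"
      unfolding g_def t_def using hf' idx by blast
    have og: "\<forall>i\<in>{1..m}. \<forall>j\<in>{1..m}. g i \<bullet> g j = (if i = j then 1 else 0)"
    proof (intro ballI)
      fix i j assume i: "i \<in> {1..m}" and j: "j \<in> {1..m}"
      have "(CARD('n) - i = CARD('n) - j) = (i = j)" using i j unfolding m_def by auto
      then show "g i \<bullet> g j = (if i = j then 1 else 0)" unfolding g_def using of idx[OF i] idx[OF j] by simp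
    qed
    have mt: "\<forall>i j. 1 \<le> i \<and> i \<le> j \<and> j \<le> m \<longrightarrow> t i \<le> t j"
    proof (intro allI impI)
      fix i j assume a: "1 \<le> i \<and> i \<le> j \<and> j \<le> m"
      have "1 \<le> CARD('n) - j \<and> CARD('n) - j \<le> CARD('n) - i \<and> CARD('n) - i \<le> m"
        using a card unfolding m_def by auto
      then have "s (CARD('n) - j) \<le> s (CARD('n) - i)" using ms by blast
      then show "t i \<le> t j" unfolding t_def by simp
    qed
    have u0: "u \<noteq> 0" using u by auto
    show ?thesis
    proof
      fix k assume k: "k \<in> {1..CARD('n) - 1}"
      then have k': "k \<in> {1..m}" unfolding m_def .
      have "t k \<le> r k" by (rule spectral_le[OF u0 m_def he oe hg og mr mt k'])
      moreover have "r k \<le> t k" by (rule spectral_le[OF u0 m_def hg og he oe mt mr k'])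
      ultimately show "r k + s (CARD('n) - k) = 1" unfolding t_def by simp
    qed
  qed
  show ?thesis using fr1 fr2 CD(2) g2 radii by blast
qed

end
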